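(* Assume $\mathcal I\neq\emptyset$. If the maximal isotropic subspace $\mathcal M=\mathcal M(A,B)$ is strictly positive, then $$\mathbb I+[\mathbb I-\mathfrak S(i\varkappa;\mathcal M)T(i\varkappa;\underline a)]^{-1}\mathfrak S(i\varkappa;\mathcal M)\succ0$$ holds for all sufficiently large $\varkappa\geq0$.
   Context: Let $\mathcal G$ be a finite connected graph with sets $\mathcal I$ of internal edges with lengths $\underline a=\{a_i\}$, $a_i>0$, and $\mathcal E$ of external edges. $\mathcal K=\mathcal K_{\mathcal E}\oplus\mathcal K^{(-)}_{\mathcal I}\oplus\mathcal K^{(+)}_{\mathcal I}\cong\mathbb C^{|\mathcal E|}\oplus\mathbb C^{|\mathcal I|}\oplus\mathbb C^{|\mathcal I|}$, ${}^d\mathcal K=\mathcal K\oplus\mathcal K$. Maximal isotropic subspaces of ${}^d\mathcal K$ (for the form $\langle\chi,J\chi'\rangle$, $J=\begin{pmatrix}0&\mathbb I\\-\mathbb I&0\end{pmatrix}$) are $\mathcal M(A,B)=\{\chi_1\oplus\chi_2:A\chi_1+B\chi_2=0\}$ with $(A,B)$ of rank $\dim\mathcal K$ and $AB^\dagger$ self-adjoint. $\mathfrak S(\mathsf k;\mathcal M)=-(A+i\mathsf kB)^{-1}(A-i\mathsf kB)$ when the inverse exists. $T(\mathsf k;\underline a)=\begin{pmatrix}0&0&0\\0&0&e^{i\mathsf k\underline a}\\0&e^{i\mathsf k\underline a}&0\end{pmatrix}$ w.r.t. $\mathcal K_{\mathcal E}\oplus\mathcal K^{(-)}_{\mathcal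 I}\oplus\mathcal K^{(+)}_{\mathcal I}$, $e^{i\mathsf k\underline a}=\operatorname{diag}(e^{i\mathsf ka_i})$. $C\succ0$ ($C\succcurlyeq0$) means all matrix entries are positive (nonnegative). $\mathcal M$ is strictly positive if there is $\varkappa_0\ge0$ with $\mathbb I+\mathfrak S(i\varkappa;\mathcal M)\succ0$ for all $\varkappa\ge\varkappa_0$. *)

theory Defs
  imports "Jordan_Normal_Form.Schur_Decomposition" "Jordan_Normal_Form.DL_Rank"
begin

(* Inverse of an n x n complex matrix (meaningful when it is invertible). *)
definition mat_inv :: "nat \<Rightarrow> complex mat \<Rightarrow> complex mat" where
  "mat_inv n M = (SOME N. N \<in> carrier_mat n n \<and> M * N = 1\<^sub>m n \<and> N * M = 1\<^sub>m n)"

definition block_AB :: "complex mat \<Rightarrow> complex mat \<Rightarrow> complex mat" where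
  "block_AB A B = mat (dim_row A) (dim_col A + dim_col B)
     (\<lambda>(i,j). if j < dim_col A then A $$ (i,j) else B $$ (i, j - dim_col A))"

definition max_isotropic :: "nat \<Rightarrow> complex mat \<Rightarrow> complex mat \<Rightarrow> bool" where
  "max_isotropic n A B \<longleftrightarrow> A \<in> carrier_mat n n \<and> B \<in> carrier_mat n n
     \<and> vec_space.rank n (block_AB A B) = n
     \<and> mat_adjoint (A * mat_adjoint B) = A * mat_adjoint B"

definition scat :: "complex \<Rightarrow> complex mat \<Rightarrow> complex mat \<Rightarrow> complex mat" where
  "scat k A B = - (mat_inv (dim_row A) (A + (\<i> * k) \<cdot>\<^sub>m B) * (A - (\<i> * k) \<cdot>\<^sub>m B))"

(* T(k; a) w.r.t. K_E (+) K_I^- (+) K_I^+, with |E| = nE, |I| = nI;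
   indices 0..nE-1 external, nE..nE+nI-1 the K_I^- copy, nE+nI..nE+2nI-1 the K_I^+ copy *)
definition Tmat :: "nat \<Rightarrow> nat \<Rightarrow> (nat \<Rightarrow> real) \<Rightarrow> complex \<Rightarrow> complex mat" where
  "Tmat nE nI a k = mat (nE + 2 * nI) (nE + 2 * nI) (\<lambda>(i,j).
      if nE \<le> i \<and> i < nE + nI \<and> j = i + nI then exp (\<i> * k * of_real (a (i - nE)))
      else if nE + nI \<le> i \<and> j + nI = i then exp (\<i> * k * of_real (a (i - nE - nI)))
      else 0)"

(* C \<succ> 0: all entries positive (in the order of HOL-Library.Complex_Order:
   real and > 0) *)
definition mat_pos :: "complex mat \<Rightarrow> bool" where
  "mat_pos C \<longleftrightarrow> (\<forall>i < dim_row C. \<forall>j < dim_col C. 0 < C $$ (i,j))"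

definition strictly_positive :: "complex mat \<Rightarrow> complex mat \<Rightarrow> bool" where
  "strictly_positive A B \<longleftrightarrow> (\<exists>\<kappa>0::real \<ge> 0. \<forall>\<kappa> \<ge> \<kappa>0.
      invertible_mat (A + (\<i> * (\<i> * of_real \<kappa>)) \<cdot>\<^sub>m B)
      \<and> mat_pos (1\<^sub>m (dim_row A) + scat (\<i> * of_real \<kappa>) A B))"

end

theory Submission
  imports Defs "HOL-Computational_Algebra.Polynomial" "HOL-Real_Asymp.Real_Asymp"
begin



lemma poly_bounds:
  fixes p :: "complex poly"
  assumes "p \<noteq> 0"
  shows "eventually (\<lambda>x::real. cmod (lead_coeff p)/2 * x^degree p \<le> cmod (poly p (of_real x))
      \<and> cmod (poly p (of_real x)) \<le> 2 * cmod (lead_coeff p) * x^degree p) at_top"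
proof -
  have lim: "((\<lambda>x::real. poly p (of_real x) / (of_real x)^degree p) \<longlongrightarrow> lead_coeff p) at_top"
    using filterlim_compose[OF poly_divide_tendsto_aux[of p] filterlim_of_real_at_infinity] by simp
  have lim2: "((\<lambda>x::real. cmod (poly p (of_real x)) / x^degree p) \<longlongrightarrow> cmod (lead_coeff p)) at_top"
  proof -
    have "((\<lambda>x::real. cmod (poly p (of_real x)) / \<bar>x\<bar>^degree p) \<longlongrightarrow> cmod (lead_coeff p)) at_top"
      using tendsto_norm[OF lim] by (simp add: norm_divide norm_power)
    moreover have "eventually (\<lambda>x::real. cmod (poly p (of_real x)) / \<bar>x\<bar>^degree p = cmod (poly p (of_real x)) / x^degree p) at_top"
      using eventually_gt_at_top[of 0] by eventually_elim simp
    ultimately show ?thesis using tendsto_cong by fast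
  qed
  have lc: "cmod (lead_coeff p) > 0" using assms by simp
  have e1: "eventually (\<lambda>x. cmod (poly p (of_real x)) / x^degree p > cmod (lead_coeff p)/2) at_top"
    by (rule order_tendstoD(1)[OF lim2]) (use lc in simp)
  have e2: "eventually (\<lambda>x. cmod (poly p (of_real x)) / x^degree p < 2 * cmod (lead_coeff p)) at_top"
    by (rule order_tendstoD(2)[OF lim2]) (use lc in simp)
  show ?thesis using eventually_conj[OF e1 eventually_conj[OF e2 eventually_gt_at_top[of 0]]]
    by eventually_elim (auto simp: field_simps)
qed

lemma poly_lower:
  fixes p :: "complex poly" and e :: real
  assumes "p \<noteq> 0" "e > 0"
  shows "eventually (\<lambda>x::real. exp (- e * x) \<le> cmod (poly p (of_real x))) at_top"
proof -
  have lc: "cmod (lead_coeff p) > 0" using assms by simp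
  have "((\<lambda>x::real. exp (- e * x)) \<longlongrightarrow> 0) at_top"
    using assms(2) by real_asymp
  then have "eventually (\<lambda>x::real. exp (- e * x) < cmod (lead_coeff p)/2) at_top"
    by (rule order_tendstoD(2)) (use lc in simp)
  then show ?thesis using eventually_conj[OF poly_bounds[OF assms(1)] eventually_ge_at_top[of 1]]
  proof eventually_elim
    case (elim x)
    have "1 \<le> x^degree p" using elim by simp
    then have "cmod (lead_coeff p)/2 \<le> cmod (lead_coeff p)/2 * x^degree p"
      using lc by simp
    then show ?case using elim by linarith
  qed
qed

lemma poly_upper:
  fixes p :: "complex poly" and e :: real
  assumes "e > 0"
  shows "eventually (\<lambda>x::real. cmod (poly p (of_real x)) \<le> exp (e * x)) at_top"
proof (cases "p = 0")
  case True then show ?thesis by simp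
next
  case False
  have "((\<lambda>x::real. (2 * cmod (lead_coeff p)) * x^degree p / exp (e * x)) \<longlongrightarrow> 0) at_top"
    using assms by real_asymp
  then have "eventually (\<lambda>x::real. (2 * cmod (lead_coeff p)) * x^degree p / exp (e * x) < 1) at_top"
    by (rule order_tendstoD(2)) simp
  then show ?thesis using poly_bounds[OF False]
    by eventually_elim (auto simp: field_simps)
qed




lemma mult_entry:
  assumes "A \<in> carrier_mat n n" "B \<in> carrier_mat n n" "i < n" "j < n"
  shows "(A * B) $$ (i,j) = (\<Sum>k<n. A $$ (i,k) * B $$ (k,j))"
  using assms by (auto simp: scalar_prod_def lessThan_atLeast0 intro: sum.cong)

lemma mult_bound:
  fixes A B :: "real mat"
  assumes "A \<in> carrier_mat n n" "B \<in> carrier_mat n n"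
    and "\<forall>i<n. \<forall>j<n. \<bar>A $$ (i,j)\<bar> \<le> a" "\<forall>i<n. \<forall>j<n. \<bar>B $$ (i,j)\<bar> \<le> b"
    and "i < n" "j < n"
  shows "\<bar>(A * B) $$ (i,j)\<bar> \<le> n * a * b"
proof -
  have a0: "0 \<le> a" using assms(3,5) by (meson abs_ge_zero order_trans)
  have "\<bar>(A * B) $$ (i,j)\<bar> = \<bar>\<Sum>k<n. A $$ (i,k) * B $$ (k,j)\<bar>"
    using mult_entry[OF assms(1,2,5,6)] by simp
  also have "\<dots> \<le> (\<Sum>k<n. \<bar>A $$ (i,k) * B $$ (k,j)\<bar>)" by (rule sum_abs)
  also have "\<dots> \<le> (\<Sum>k<n. a * b)"
  proof (rule sum_mono)
    fix k assume k: "k \<in> {..<n}"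
    have "\<bar>A $$ (i,k)\<bar> * \<bar>B $$ (k,j)\<bar> \<le> a * b"
      using assms(3,4,5,6) k a0 by (intro mult_mono) auto
    then show "\<bar>A $$ (i,k) * B $$ (k,j)\<bar> \<le> a * b" by (simp add: abs_mult)
  qed
  finally show ?thesis by simp
qed

lemma mat_inv_unique:
  assumes "M \<in> carrier_mat n n" "N \<in> carrier_mat n n" "M * N = 1\<^sub>m n" "N * M = 1\<^sub>m n"
  shows "mat_inv n M = N"
proof -
  have "\<exists>N. N \<in> carrier_mat n n \<and> M * N = 1\<^sub>m n \<and> N * M = 1\<^sub>m n" using assms by blast
  then have h: "mat_inv n M \<in> carrier_mat n n \<and> M * mat_inv n M = 1\<^sub>m n \<and> mat_inv n M * M = 1\<^sub>m n"
    unfolding mat_inv_def by (rule someI_ex)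
  have "mat_inv n M = mat_inv n M * (M * N)" using right_mult_one_mat[of "mat_inv n M" n n] h assms by simp
  also have "\<dots> = (mat_inv n M * M) * N" using h assms by (intro assoc_mult_mat[symmetric]) auto
  also have "\<dots> = N" proof -
    have "mat_inv n M * M = 1\<^sub>m n" using h by blast
    then show ?thesis using left_mult_one_mat[OF assms(2)] by simp
  qed
  finally show ?thesis .
qed

lemma adj_inverse:
  fixes M :: "'a::field mat"
  assumes "M \<in> carrier_mat n n" "det M \<noteq> 0"
  shows "M * ((1 / det M) \<cdot>\<^sub>m adj_mat M) = 1\<^sub>m n" "((1 / det M) \<cdot>\<^sub>m adj_mat M) * M = 1\<^sub>m n"
    "(1 / det M) \<cdot>\<^sub>m adj_mat M \<in> carrier_mat n n"
proof -
  note a = adj_mat[OF assms(1)]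
  show "M * ((1 / det M) \<cdot>\<^sub>m adj_mat M) = 1\<^sub>m n"
    using assms a by (subst mult_smult_distrib[of _ n n _ n]) (auto intro!: eq_matI)
  show "((1 / det M) \<cdot>\<^sub>m adj_mat M) * M = 1\<^sub>m n"
    using assms a by (subst mult_smult_assoc_mat[of _ n n _ n]) (auto intro!: eq_matI)
  show "(1 / det M) \<cdot>\<^sub>m adj_mat M \<in> carrier_mat n n" using a by simp
qed

lemma invertible_det_nz:
  fixes M :: "'a::field mat"
  assumes "M \<in> carrier_mat n n" "invertible_mat M"
  shows "det M \<noteq> 0"
proof -
  obtain N where N: "M * N = 1\<^sub>m n" "N * M = 1\<^sub>m (dim_row N)"
    using assms unfolding invertible_mat_def inverts_mat_def by auto
  have "dim_col N = n" using N(1) assms(1) by (metis carrier_matD(2) index_mult_mat(3) index_one_mat(3))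
  moreover have "dim_row N = n" using N(2) assms(1)
    by (metis carrier_matD(2) index_mult_mat(3) index_one_mat(3))
  ultimately have Nc: "N \<in> carrier_mat n n" by auto
  have "det M * det N = 1" using det_mult[OF assms(1) Nc] N(1) by simp
  then show ?thesis by auto
qed




lemma neumann:
  fixes E :: "real mat"
  assumes E: "E \<in> carrier_mat n n" and eb: "\<forall>i<n. \<forall>j<n. \<bar>E $$ (i,j)\<bar> \<le> e"
    and ne: "n * e \<le> 1/2"
  shows "\<exists>Y \<in> carrier_mat n n. (1\<^sub>m n - E) * Y = 1\<^sub>m n \<and> Y * (1\<^sub>m n - E) = 1\<^sub>m n
     \<and> (\<forall>i<n. \<forall>j<n. \<bar>Y $$ (i,j)\<bar> \<le> 2)"
proof -
  let ?M = "1\<^sub>m n - E"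
  have M: "?M \<in> carrier_mat n n" using E by (simp add: minus_carrier_mat)
  have Mentry: "?M $$ (i,k) = (if i = k then 1 else 0) - E $$ (i,k)" if "i < n" "k < n" for i k
    using that E by simp
  have det: "det ?M \<noteq> 0"
  proof
    assume "det ?M = 0"
    then obtain v where v: "v \<in> carrier_vec n" "v \<noteq> 0\<^sub>v n" "?M *\<^sub>v v = 0\<^sub>v n"
      using det_0_iff_vec_prod_zero[OF M] by auto
    have ex: "\<exists>k<n. v $ k \<noteq> 0"
    proof (rule ccontr)
      assume "\<not> ?thesis"
      then have "v = 0\<^sub>v n" using v(1) by (intro eq_vecI) auto
      with v(2) show False by simp
    qed
    then have n0: "n > 0" by auto
    define \<mu> where "\<mu> = Max ((\<lambda>k. \<bar>v $ k\<bar>) ` {..<n})"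
    have vmu: "\<bar>v $ k\<bar> \<le> \<mu>" if "k < n" for k unfolding \<mu>_def using that by auto
    have "\<mu> \<in> (\<lambda>k. \<bar>v $ k\<bar>) ` {..<n}" unfolding \<mu>_def using n0 by (intro Max_in) auto
    then obtain i where i: "i < n" "\<bar>v $ i\<bar> = \<mu>" by auto
    from ex obtain k where k: "k < n" "v $ k \<noteq> 0" by blast
    have mu0: "\<mu> > 0" using vmu[OF k(1)] k(2) by linarith
    have "\<bar>E $$ (0,0)\<bar> \<le> e" using eb n0 by blast
    then have e0: "0 \<le> e" by linarith
    have "0 = (?M *\<^sub>v v) $ i" using v(3) i by simp
    also have "\<dots> = (\<Sum>k<n. ?M $$ (i,k) * v $ k)"
      using i v(1) E by (auto simp: scalar_prod_def lessThan_atLeast0 intro!: sum.cong)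
    also have "\<dots> = (\<Sum>k<n. (if i = k then 1 else 0) * v $ k) - (\<Sum>k<n. E $$ (i,k) * v $ k)"
      using i by (simp add: Mentry left_diff_distrib sum_subtractf)
    also have "(\<Sum>k<n. (if i = k then 1 else 0) * v $ k) = v $ i"
    proof -
      have "(\<Sum>k<n. (if i = k then 1 else 0) * v $ k) = (\<Sum>k<n. if i = k then v $ k else 0)" by (rule sum.cong) auto
      then show ?thesis using i by simp
    qed
    finally have vi: "v $ i = (\<Sum>k<n. E $$ (i,k) * v $ k)" by simp
    have "\<mu> = \<bar>\<Sum>k<n. E $$ (i,k) * v $ k\<bar>" using vi i by simp
    also have "\<dots> \<le> (\<Sum>k<n. \<bar>E $$ (i,k) * v $ k\<bar>)" by (rule sum_abs)
    also have "\<dots> \<le> (\<Sum>k<n. e * \<mu>)"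
    proof (rule sum_mono)
      fix k assume k: "k \<in> {..<n}"
      have "\<bar>E $$ (i,k)\<bar> * \<bar>v $ k\<bar> \<le> e * \<mu>"
        using eb vmu i k e0 by (intro mult_mono) auto
      then show "\<bar>E $$ (i,k) * v $ k\<bar> \<le> e * \<mu>" by (simp add: abs_mult)
    qed
    also have "\<dots> = (n * e) * \<mu>" by simp
    also have "\<dots> \<le> \<mu> / 2" using mult_right_mono[OF ne, of \<mu>] mu0 by simp
    finally show False using mu0 by simp
  qed
  define Y where "Y = (1 / det ?M) \<cdot>\<^sub>m adj_mat ?M"
  note Yp = adj_inverse[OF M det, folded Y_def]
  have Yb: "\<bar>Y $$ (i,j)\<bar> \<le> 2" if ij: "i < n" "j < n" for i j
  proof -
    have n0: "n > 0" using ij by simp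
    define \<beta> where "\<beta> = Max ((\<lambda>(k,l). \<bar>Y $$ (k,l)\<bar>) ` ({..<n} \<times> {..<n}))"
    have yb: "\<bar>Y $$ (k,l)\<bar> \<le> \<beta>" if "k < n" "l < n" for k l
      unfolding \<beta>_def using that by (intro Max_ge) auto
    have "\<beta> \<in> (\<lambda>(k,l). \<bar>Y $$ (k,l)\<bar>) ` ({..<n} \<times> {..<n})" unfolding \<beta>_def using n0 by (intro Max_in) auto
    then obtain i' j' where ij': "i' < n" "j' < n" "\<bar>Y $$ (i',j')\<bar> = \<beta>" by auto
    have b0: "\<beta> \<ge> 0" using ij' by auto
    have "\<bar>E $$ (0,0)\<bar> \<le> e" using eb n0 by blast
    then have e0: "0 \<le> e" by linarith
    have "(if i' = j' then 1 else 0) = (?M * Y) $$ (i',j')" using Yp(1) ij' by simp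
    also have "\<dots> = (\<Sum>k<n. ?M $$ (i',k) * Y $$ (k,j'))" using mult_entry[OF M Yp(3) ij'(1,2)] .
    also have "\<dots> = (\<Sum>k<n. (if i' = k then 1 else 0) * Y $$ (k,j')) - (\<Sum>k<n. E $$ (i',k) * Y $$ (k,j'))"
      using ij' by (simp add: Mentry left_diff_distrib sum_subtractf)
    also have "(\<Sum>k<n. (if i' = k then 1 else 0) * Y $$ (k,j')) = Y $$ (i',j')"
    proof -
      have "(\<Sum>k<n. (if i' = k then 1 else 0) * Y $$ (k,j')) = (\<Sum>k<n. if i' = k then Y $$ (k,j') else 0)" by (rule sum.cong) auto
      then show ?thesis using ij' by simp
    qed
    finally have yi: "Y $$ (i',j') = (if i' = j' then 1 else 0) + (\<Sum>k<n. E $$ (i',k) * Y $$ (k,j'))" by simp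
    have "\<beta> \<le> 1 + \<bar>\<Sum>k<n. E $$ (i',k) * Y $$ (k,j')\<bar>" using yi ij' by auto
    also have "\<bar>\<Sum>k<n. E $$ (i',k) * Y $$ (k,j')\<bar> \<le> (\<Sum>k<n. \<bar>E $$ (i',k) * Y $$ (k,j')\<bar>)" by (rule sum_abs)
    also have "\<dots> \<le> (\<Sum>k<n. e * \<beta>)"
    proof (rule sum_mono)
      fix k assume k: "k \<in> {..<n}"
      have "\<bar>E $$ (i',k)\<bar> * \<bar>Y $$ (k,j')\<bar> \<le> e * \<beta>"
        using eb yb ij' k e0 by (intro mult_mono) auto
      then show "\<bar>E $$ (i',k) * Y $$ (k,j')\<bar> \<le> e * \<beta>" by (simp add: abs_mult)
    qed
    also have "\<dots> = (n * e) * \<beta>" by simp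
    also have "\<dots> \<le> \<beta> / 2" using mult_right_mono[OF ne b0] by simp
    finally have "\<beta> \<le> 2" by simp
    then show ?thesis using yb[OF ij] by simp
  qed
  show ?thesis using Yp Yb by blast
qed




lemma main_real:
  fixes Sr Tr :: "real mat"
  assumes S: "Sr \<in> carrier_mat n n" and T: "Tr \<in> carrier_mat n n"
    and sb: "\<forall>i<n. \<forall>j<n. \<bar>Sr $$ (i,j)\<bar> \<le> s"
    and tb: "\<forall>i<n. \<forall>j<n. \<bar>Tr $$ (i,j)\<bar> \<le> t"
    and lb: "\<forall>i<n. \<forall>j<n. l \<le> (1\<^sub>m n + Sr) $$ (i,j)"
    and c1: "n * (n * s * t) \<le> 1/2"
    and c2: "n * (real n * 2 * (n * s * t)) * s < l"
  shows "\<exists>Y \<in> carrier_mat n n. (1\<^sub>m n - Sr * Tr) * Y = 1\<^sub>m n \<and> Y * (1\<^sub>m n - Sr * Tr) = 1\<^sub>m n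
     \<and> (\<forall>i<n. \<forall>j<n. 0 < (1\<^sub>m n + Y * Sr) $$ (i,j))"
proof -
  define E where "E = Sr * Tr"
  have E: "E \<in> carrier_mat n n" unfolding E_def using S T by simp
  have eb: "\<forall>i<n. \<forall>j<n. \<bar>E $$ (i,j)\<bar> \<le> n * s * t"
    unfolding E_def using mult_bound[OF S T sb tb] by blast
  obtain Y where Y: "Y \<in> carrier_mat n n" "(1\<^sub>m n - E) * Y = 1\<^sub>m n" "Y * (1\<^sub>m n - E) = 1\<^sub>m n"
    "\<forall>i<n. \<forall>j<n. \<bar>Y $$ (i,j)\<bar> \<le> 2"
    using neumann[OF E eb c1] by blast
  have YE: "Y * (1\<^sub>m n - E) = Y - Y * E"
  proof -
    have "Y * (1\<^sub>m n - E) = Y * 1\<^sub>m n - Y * E"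
      using Y(1) E by (intro mult_minus_distrib_mat[of _ n n]) auto
    also have "Y * 1\<^sub>m n = Y" using Y(1) by (rule right_mult_one_mat)
    finally show ?thesis .
  qed
  have Yid: "Y = 1\<^sub>m n + Y * E"
  proof (rule eq_matI)
    fix i j assume ij: "i < dim_row (1\<^sub>m n + Y * E)" "j < dim_col (1\<^sub>m n + Y * E)"
    then have ij': "i < n" "j < n" using Y(1) E by auto
    have "(Y - Y * E) $$ (i,j) = 1\<^sub>m n $$ (i,j)" using Y(3) YE by simp
    then show "Y $$ (i,j) = (1\<^sub>m n + Y * E) $$ (i,j)" using ij' Y(1) E by simp
  qed (use Y(1) E in auto)
  have YS: "Y * Sr = Sr + (Y * E) * Sr"
  proof -
    have "Y * Sr = (1\<^sub>m n + Y * E) * Sr" using Yid by simp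
    also have "\<dots> = 1\<^sub>m n * Sr + (Y * E) * Sr"
      using Y(1) E S by (intro add_mult_distrib_mat[of _ n n]) auto
    also have "1\<^sub>m n * Sr = Sr" using S by simp
    finally show ?thesis .
  qed
  have YEb: "\<forall>i<n. \<forall>j<n. \<bar>(Y * E) $$ (i,j)\<bar> \<le> real n * 2 * (n * s * t)"
    by (intro allI impI mult_bound[OF Y(1) E Y(4) eb])
  have YESb: "\<bar>((Y * E) * Sr) $$ (i,j)\<bar> \<le> n * (real n * 2 * (n * s * t)) * s" if "i < n" "j < n" for i j
    using mult_bound[OF _ S YEb sb that] Y(1) E by simp
  have pos: "0 < (1\<^sub>m n + Y * Sr) $$ (i,j)" if ij: "i < n" "j < n" for i j
  proof -
    have "(1\<^sub>m n + Y * Sr) $$ (i,j) = (1\<^sub>m n + Sr) $$ (i,j) + ((Y * E) * Sr) $$ (i,j)"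
      using YS ij Y(1) E S by simp
    moreover have "l \<le> (1\<^sub>m n + Sr) $$ (i,j)" using lb ij by blast
    ultimately show ?thesis using YESb[OF ij] c2 by linarith
  qed
  show ?thesis using Y pos unfolding E_def by blast
qed




definition polyfun :: "(real \<Rightarrow> complex) \<Rightarrow> bool" where
  "polyfun f \<longleftrightarrow> (\<exists>p. \<forall>x. f x = poly p (of_real x))"

lemma polyfun_const[intro]: "polyfun (\<lambda>x. c)"
  unfolding polyfun_def by (rule exI[of _ "[:c:]"]) simp

lemma polyfun_var[intro]: "polyfun (\<lambda>x. of_real x)"
  unfolding polyfun_def by (rule exI[of _ "[:0,1:]"]) simp

lemma polyfun_add[intro]: "polyfun f \<Longrightarrow> polyfun g \<Longrightarrow> polyfun (\<lambda>x. f x + g x)"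
  unfolding polyfun_def by (metis poly_add)

lemma polyfun_mult[intro]: "polyfun f \<Longrightarrow> polyfun g \<Longrightarrow> polyfun (\<lambda>x. f x * g x)"
  unfolding polyfun_def by (metis poly_mult)

lemma polyfun_uminus[intro]: "polyfun f \<Longrightarrow> polyfun (\<lambda>x. - f x)"
  unfolding polyfun_def by (metis poly_minus)

lemma polyfun_diff[intro]: "polyfun f \<Longrightarrow> polyfun g \<Longrightarrow> polyfun (\<lambda>x. f x - g x)"
  unfolding polyfun_def by (metis poly_diff)

lemma polyfun_sum:
  assumes "\<And>a. a \<in> A \<Longrightarrow> polyfun (f a)"
  shows "polyfun (\<lambda>x. \<Sum>a\<in>A. f a x)"
proof (cases "finite A")
  case True
  then show ?thesis using assms
  proof (induction A rule: finite_induct)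
    case empty then show ?case by (simp add: polyfun_const)
  next
    case (insert a A)
    then show ?case by (simp add: polyfun_add)
  qed
qed (simp add: polyfun_const)

lemma polyfun_prod:
  assumes "\<And>a. a \<in> A \<Longrightarrow> polyfun (f a)"
  shows "polyfun (\<lambda>x. \<Prod>a\<in>A. f a x)"
proof (cases "finite A")
  case True
  then show ?thesis using assms
  proof (induction A rule: finite_induct)
    case empty then show ?case by (simp add: polyfun_const)
  next
    case (insert a A)
    then show ?case by (simp add: polyfun_mult)
  qed
qed (simp add: polyfun_const)

definition pfmat :: "nat \<Rightarrow> (real \<Rightarrow> complex mat) \<Rightarrow> bool" where
  "pfmat n F \<longleftrightarrow> (\<forall>x. F x \<in> carrier_mat n n) \<and> (\<forall>i<n. \<forall>j<n. polyfun (\<lambda>x. F x $$ (i,j)))"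

lemma polyfun_det:
  assumes "pfmat n F"
  shows "polyfun (\<lambda>x. det (F x))"
proof -
  have F: "F x \<in> carrier_mat n n" for x using assms unfolding pfmat_def by blast
  have "det (F x) = (\<Sum>p \<in> {p. p permutes {0..<n}}. signof p * (\<Prod>i = 0..<n. F x $$ (i, p i)))" for x
    using det_def'[OF F] .
  moreover have "polyfun (\<lambda>x. \<Sum>p \<in> {p. p permutes {0..<n}}. signof p * (\<Prod>i = 0..<n. F x $$ (i, p i)))"
  proof (rule polyfun_sum)
    fix p assume "p \<in> {p. p permutes {0..<n}}"
    then have pp: "p permutes {0..<n}" by simp
    have "polyfun (\<lambda>x. \<Prod>i = 0..<n. F x $$ (i, p i))"
    proof (rule polyfun_prod)
      fix i assume i: "i \<in> {0..<n}"
      then have "p i \<in> {0..<n}" using pp by (simp add: permutes_in_image)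
      then show "polyfun (\<lambda>x. F x $$ (i, p i))" using i assms unfolding pfmat_def by auto
    qed
    then show "polyfun (\<lambda>x. signof p * (\<Prod>i = 0..<n. F x $$ (i, p i)))"
      by (intro polyfun_mult polyfun_const)
  qed
  ultimately show ?thesis by simp
qed

lemma pfmat_delete:
  assumes "pfmat n F" "i < n" "j < n"
  shows "pfmat (n - 1) (\<lambda>x. mat_delete (F x) i j)"
  unfolding pfmat_def
proof (intro conjI allI impI)
  fix x show "mat_delete (F x) i j \<in> carrier_mat (n - 1) (n - 1)"
    using assms mat_delete_carrier[of "F x" n n i j] unfolding pfmat_def by auto
next
  fix i' j' assume ij: "i' < n - 1" "j' < n - 1"
  have F: "F x \<in> carrier_mat n n" for x using assms unfolding pfmat_def by blast
  have e: "mat_delete (F x) i j $$ (i',j') = F x $$ (if i' < i then i' else Suc i', if j' < j then j' else Suc j')" for x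
    using F[of x] ij unfolding mat_delete_def by auto
  have "(if i' < i then i' else Suc i') < n" "(if j' < j then j' else Suc j') < n" using ij by auto
  then have "polyfun (\<lambda>x. F x $$ (if i' < i then i' else Suc i', if j' < j then j' else Suc j'))"
    using assms unfolding pfmat_def by blast
  then show "polyfun (\<lambda>x. mat_delete (F x) i j $$ (i', j'))" unfolding e .
qed

lemma pfmat_adj:
  assumes "pfmat n F"
  shows "pfmat n (\<lambda>x. adj_mat (F x))"
  unfolding pfmat_def
proof (intro conjI allI impI)
  have F: "F x \<in> carrier_mat n n" for x using assms unfolding pfmat_def by blast
  fix x show "adj_mat (F x) \<in> carrier_mat n n" using adj_mat(1)[OF F] .
next
  have F: "F x \<in> carrier_mat n n" for x using assms unfolding pfmat_def by blast
  fix i j assume ij: "i < n" "j < n"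
  have e: "adj_mat (F x) $$ (i,j) = (-1)^(j+i) * det (mat_delete (F x) j i)" for x
    using F[of x] ij unfolding adj_mat_def cofactor_def by auto
  have "polyfun (\<lambda>x. det (mat_delete (F x) j i))"
    by (rule polyfun_det[OF pfmat_delete[OF assms ij(2,1)]])
  then have "polyfun (\<lambda>x. (-1)^(j+i) * det (mat_delete (F x) j i))" by (intro polyfun_mult polyfun_const)
  then show "polyfun (\<lambda>x. adj_mat (F x) $$ (i, j))" unfolding e .
qed

lemma pfmat_mult:
  assumes "pfmat n F" "pfmat n G"
  shows "pfmat n (\<lambda>x. F x * G x)"
  unfolding pfmat_def
proof (intro conjI allI impI)
  have F: "F x \<in> carrier_mat n n" for x using assms unfolding pfmat_def by blast
  have G: "G x \<in> carrier_mat n n" for x using assms unfolding pfmat_def by blast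
  fix x show "F x * G x \<in> carrier_mat n n" using F G by (rule mult_carrier_mat)
next
  have F: "F x \<in> carrier_mat n n" for x using assms unfolding pfmat_def by blast
  have G: "G x \<in> carrier_mat n n" for x using assms unfolding pfmat_def by blast
  fix i j assume ij: "i < n" "j < n"
  have e: "(F x * G x) $$ (i,j) = (\<Sum>k<n. F x $$ (i,k) * G x $$ (k,j))" for x
    by (rule mult_entry[OF F G ij])
  have "polyfun (\<lambda>x. \<Sum>k<n. F x $$ (i,k) * G x $$ (k,j))"
    using assms ij unfolding pfmat_def by (intro polyfun_sum polyfun_mult) auto
  then show "polyfun (\<lambda>x. (F x * G x) $$ (i, j))" unfolding e .
qed

lemma pfmat_uminus:
  assumes "pfmat n F"
  shows "pfmat n (\<lambda>x. - F x)"
  unfolding pfmat_def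
proof (intro conjI allI impI)
  fix x show "- F x \<in> carrier_mat n n" using assms unfolding pfmat_def by auto
next
  fix i j assume ij: "i < n" "j < n"
  have e: "(- F x) $$ (i,j) = - (F x $$ (i,j))" for x
  proof -
    have "F x \<in> carrier_mat n n" using assms unfolding pfmat_def by blast
    then show ?thesis using ij by simp
  qed
  show "polyfun (\<lambda>x. (- F x) $$ (i, j))" unfolding e using assms ij unfolding pfmat_def
    by (intro polyfun_uminus) auto
qed




lemma entry_bounds:
  fixes s d q :: "real \<Rightarrow> complex" and Dp qp :: "complex poly" and c :: complex and e \<kappa>0 :: real
  assumes d: "\<forall>x. d x = poly Dp (of_real x)" and q: "\<forall>x. q x = poly qp (of_real x)"
    and sq: "\<forall>x\<ge>\<kappa>0. s x * d x = q x" and dnz: "\<forall>x\<ge>\<kappa>0. d x \<noteq> 0"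
    and pos: "\<forall>x\<ge>\<kappa>0. 0 < c + s x" and e: "e > 0"
  shows "eventually (\<lambda>x. cmod (s x) \<le> exp (2*e*x) \<and> exp (-(2*e*x)) \<le> Re (c + s x)) at_top"
proof -
  have "Dp \<noteq> 0" using dnz d by (metis order_refl poly_0)
  note ev1 = poly_lower[OF this e] and ev2 = poly_upper[OF e, of Dp] and ev3 = poly_upper[OF e, of qp]
  define pp where "pp = smult c Dp + qp"
  have ppx: "poly pp (of_real x) = (c + s x) * d x" if "x \<ge> \<kappa>0" for x
    using sq that d q unfolding pp_def by (simp add: distrib_right)
  have "pp \<noteq> 0"
  proof
    assume "pp = 0"
    then have "(c + s \<kappa>0) * d \<kappa>0 = 0" using ppx[of \<kappa>0] by simp
    moreover have "c + s \<kappa>0 \<noteq> 0" using pos by (metis order_refl order_less_irrefl)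
    ultimately show False using dnz by simp
  qed
  note ev4 = poly_lower[OF this e]
  show ?thesis
    using eventually_conj[OF ev1 eventually_conj[OF ev2 eventually_conj[OF ev3
        eventually_conj[OF ev4 eventually_ge_at_top[of \<kappa>0]]]]]
  proof eventually_elim
    case (elim x)
    have dx: "cmod (d x) \<ge> exp (-e*x)" "cmod (d x) \<le> exp (e*x)" using elim d by auto
    have qx: "cmod (q x) \<le> exp (e*x)" using elim q by auto
    have px: "cmod ((c + s x) * d x) \<ge> exp (-e*x)" using elim ppx by auto
    have ex: "exp (e*x) * exp (-e*x) = 1" by (simp add: exp_minus[symmetric] exp_add[symmetric])
    have ex2: "exp (2*e*x) = exp (e*x) * exp (e*x)" by (simp add: exp_add[symmetric])
    have ex3: "exp (-(2*e*x)) = exp (-e*x) * exp (-e*x)" by (simp add: exp_add[symmetric])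
    have sd: "cmod (s x) * cmod (d x) = cmod (q x)" using sq elim by (metis norm_mult)
    have 1: "cmod (s x) \<le> exp (2*e*x)"
    proof -
      have "cmod (s x) = cmod (s x) * (exp (-e*x) * exp (e*x))" using ex by (simp add: mult.commute)
      also have "\<dots> = (cmod (s x) * exp (-e*x)) * exp (e*x)" by simp
      also have "\<dots> \<le> (cmod (s x) * cmod (d x)) * exp (e*x)"
        using dx by (intro mult_right_mono mult_left_mono) auto
      also have "\<dots> \<le> exp (e*x) * exp (e*x)" using sd qx by (intro mult_right_mono) auto
      finally show ?thesis using ex2 by simp
    qed
    have cpos: "0 < c + s x" using pos elim by auto
    then have re: "Re (c + s x) = cmod (c + s x)" "Im (c + s x) = 0"
      by (auto simp: less_complex_def cmod_eq_Re)
    have 2: "exp (-(2*e*x)) \<le> cmod (c + s x)"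
    proof -
      have h: "exp (-e*x) \<le> cmod (c + s x) * exp (e*x)"
      proof -
        have "exp (-e*x) \<le> cmod (c + s x) * cmod (d x)" using px by (simp add: norm_mult)
        also have "\<dots> \<le> cmod (c + s x) * exp (e*x)" using dx by (intro mult_left_mono) auto
        finally show ?thesis .
      qed
      have "exp (-e*x) * exp (-e*x) \<le> (cmod (c + s x) * exp (e*x)) * exp (-e*x)"
        using mult_right_mono[OF h, of "exp (-e*x)"] by simp
      also have "\<dots> = cmod (c + s x) * (exp (e*x) * exp (-e*x))" by (simp only: mult.assoc)
      also have "\<dots> = cmod (c + s x)" using ex by simp
      finally show ?thesis using ex3 by simp
    qed
    show ?case using 1 2 re by simp
  qed
qed

lemma ev_small:
  fixes \<alpha> :: real and K :: real
  assumes "\<alpha> > 0"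
  shows "eventually (\<lambda>x. K * exp (- (\<alpha> * x)) < 1) at_top"
proof -
  have "((\<lambda>x. K * exp (- (\<alpha> * x))) \<longlongrightarrow> 0) at_top" using assms by real_asymp
  then show ?thesis by (rule order_tendstoD(2)) simp
qed




lemma map_of_real_one_minus:
  fixes P :: "real mat"
  assumes "P \<in> carrier_mat n n"
  shows "map_mat complex_of_real (1\<^sub>m n - P) = 1\<^sub>m n - map_mat complex_of_real P"
    "map_mat complex_of_real (1\<^sub>m n + P) = 1\<^sub>m n + map_mat complex_of_real P"
  using assms by (auto intro!: eq_matI)

lemma transfer_lemma:
  fixes Sr Tr Y :: "real mat"
  assumes S: "Sr \<in> carrier_mat n n" and T: "Tr \<in> carrier_mat n n" and Y: "Y \<in> carrier_mat n n"
    and i1: "(1\<^sub>m n - Sr * Tr) * Y = 1\<^sub>m n" and i2: "Y * (1\<^sub>m n - Sr * Tr) = 1\<^sub>m n"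
    and pos: "\<forall>i<n. \<forall>j<n. 0 < (1\<^sub>m n + Y * Sr) $$ (i,j)"
  shows "invertible_mat (1\<^sub>m n - map_mat complex_of_real Sr * map_mat complex_of_real Tr)
    \<and> mat_pos (1\<^sub>m n + mat_inv n (1\<^sub>m n - map_mat complex_of_real Sr * map_mat complex_of_real Tr)
         * map_mat complex_of_real Sr)"
proof -
  let ?h = "map_mat complex_of_real"
  have ST: "Sr * Tr \<in> carrier_mat n n" using S T by simp
  have M: "?h (1\<^sub>m n - Sr * Tr) = 1\<^sub>m n - ?h Sr * ?h Tr"
    using map_of_real_one_minus(1)[OF ST] of_real_hom.mat_hom_mult[OF S T] by metis
  have Mc: "1\<^sub>m n - Sr * Tr \<in> carrier_mat n n" using ST by (simp add: minus_carrier_mat)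
  have j1: "(1\<^sub>m n - ?h Sr * ?h Tr) * ?h Y = 1\<^sub>m n"
    using of_real_hom.mat_hom_mult[OF Mc Y] i1 M of_real_hom.mat_hom_one by metis
  have j2: "?h Y * (1\<^sub>m n - ?h Sr * ?h Tr) = 1\<^sub>m n"
    using of_real_hom.mat_hom_mult[OF Y Mc] i2 M of_real_hom.mat_hom_one by metis
  have Mc': "1\<^sub>m n - ?h Sr * ?h Tr \<in> carrier_mat n n" using S T by (simp add: minus_carrier_mat)
  have Yc': "?h Y \<in> carrier_mat n n" using Y by simp
  have inv: "invertible_mat (1\<^sub>m n - ?h Sr * ?h Tr)"
    unfolding invertible_mat_def inverts_mat_def using j1 j2 Mc' Yc' S T
    by (intro conjI exI[of _ "?h Y"]) (auto simp: square_mat.simps)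
  have mi: "mat_inv n (1\<^sub>m n - ?h Sr * ?h Tr) = ?h Y"
    by (rule mat_inv_unique[OF Mc' Yc' j1 j2])
  have YS: "Y * Sr \<in> carrier_mat n n" using Y S by simp
  have e: "1\<^sub>m n + ?h Y * ?h Sr = ?h (1\<^sub>m n + Y * Sr)"
    using map_of_real_one_minus(2)[OF YS] of_real_hom.mat_hom_mult[OF Y S] by metis
  have "mat_pos (?h (1\<^sub>m n + Y * Sr))"
    unfolding mat_pos_def
  proof (intro allI impI)
    fix i j assume ij: "i < dim_row (?h (1\<^sub>m n + Y * Sr))" "j < dim_col (?h (1\<^sub>m n + Y * Sr))"
    have ij': "i < n" "j < n" using ij YS by auto
    have "?h (1\<^sub>m n + Y * Sr) $$ (i,j) = complex_of_real ((1\<^sub>m n + Y * Sr) $$ (i,j))"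
      using ij by (intro index_map_mat(1)) auto
    moreover have "0 < (1\<^sub>m n + Y * Sr) $$ (i,j)" using pos ij' by blast
    ultimately show "0 < ?h (1\<^sub>m n + Y * Sr) $$ (i,j)" by (simp add: less_complex_def)
  qed
  then show ?thesis using inv mi e by simp
qed




theorem lemma4p6:
  fixes nE nI :: nat and a :: "nat \<Rightarrow> real" and A B :: "complex mat"
  assumes "nI \<noteq> 0"
    and "\<forall>i < nI. a i > 0"
    and "max_isotropic (nE + 2 * nI) A B"
    and "strictly_positive A B"
  shows "\<exists>\<kappa>1::real \<ge> 0. \<forall>\<kappa> \<ge> \<kappa>1.
    invertible_mat (A + (\<i> * (\<i> * of_real \<kappa>)) \<cdot>\<^sub>m B)
    \<and> invertible_mat (1\<^sub>m (nE + 2 * nI)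
         - scat (\<i> * of_real \<kappa>) A B * Tmat nE nI a (\<i> * of_real \<kappa>))
    \<and> mat_pos (1\<^sub>m (nE + 2 * nI)
         + mat_inv (nE + 2 * nI) (1\<^sub>m (nE + 2 * nI)
              - scat (\<i> * of_real \<kappa>) A B * Tmat nE nI a (\<i> * of_real \<kappa>))
           * scat (\<i> * of_real \<kappa>) A B)"
proof -
  define n where "n = nE + 2 * nI"
  have A: "A \<in> carrier_mat n n" and B: "B \<in> carrier_mat n n"
    using assms(3) unfolding max_isotropic_def n_def by auto
  have dA: "dim_row A = n" using A by simp
  obtain \<kappa>0 :: real where k0: "\<kappa>0 \<ge> 0" and H: "\<And>\<kappa>. \<kappa> \<ge> \<kappa>0 \<Longrightarrow>
      invertible_mat (A + (\<i> * (\<i> * of_real \<kappa>)) \<cdot>\<^sub>m B)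
      \<and> mat_pos (1\<^sub>m (dim_row A) + scat (\<i> * of_real \<kappa>) A B)"
    using assms(4) unfolding strictly_positive_def by auto
  define N where "N = (\<lambda>x::real. A + (\<i> * (\<i> * of_real x)) \<cdot>\<^sub>m B)"
  define Nm where "Nm = (\<lambda>x::real. A - (\<i> * (\<i> * of_real x)) \<cdot>\<^sub>m B)"
  define S where "S = (\<lambda>x::real. scat (\<i> * of_real x) A B)"
  define T where "T = (\<lambda>x::real. Tmat nE nI a (\<i> * of_real x))"
  have S_eq: "S x = - (mat_inv n (N x) * Nm x)" for x unfolding S_def scat_def N_def Nm_def dA ..
  have Nc: "N x \<in> carrier_mat n n" for x unfolding N_def using A B by simp
  have Nmc: "Nm x \<in> carrier_mat n n" for x unfolding Nm_def using A B by (simp add: minus_carrier_mat)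
  have polyc: "polyfun (\<lambda>x::real. \<i> * (\<i> * of_real x))" by (intro polyfun_mult polyfun_const polyfun_var)
  have pfN: "pfmat n N"
    unfolding pfmat_def
  proof (intro conjI allI impI)
    fix x show "N x \<in> carrier_mat n n" by (rule Nc)
  next
    fix i j assume ij: "i < n" "j < n"
    have e: "N x $$ (i,j) = A $$ (i,j) + (\<i> * (\<i> * of_real x)) * B $$ (i,j)" for x
      unfolding N_def using A B ij by simp
    show "polyfun (\<lambda>x. N x $$ (i,j))" unfolding e using polyc
      by (intro polyfun_add polyfun_mult polyfun_const polyfun_var)
  qed
  have pfNm: "pfmat n Nm"
    unfolding pfmat_def
  proof (intro conjI allI impI)
    fix x show "Nm x \<in> carrier_mat n n" by (rule Nmc)
  next
    fix i j assume ij: "i < n" "j < n"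
    have e: "Nm x $$ (i,j) = A $$ (i,j) - (\<i> * (\<i> * of_real x)) * B $$ (i,j)" for x
      unfolding Nm_def using A B ij by simp
    show "polyfun (\<lambda>x. Nm x $$ (i,j))" unfolding e using polyc
      by (intro polyfun_diff polyfun_mult polyfun_const polyfun_var)
  qed
  define Q where "Q = (\<lambda>x. - (adj_mat (N x) * Nm x))"
  have pfQ: "pfmat n Q" unfolding Q_def by (intro pfmat_uminus pfmat_mult pfmat_adj pfN pfNm)
  obtain Dp where Dp: "\<forall>x. det (N x) = poly Dp (of_real x)"
    using polyfun_det[OF pfN] unfolding polyfun_def by blast
  have detnz: "det (N x) \<noteq> 0" if "x \<ge> \<kappa>0" for x
    using invertible_det_nz[OF Nc] H[OF that] unfolding N_def by blast
  have adjc: "adj_mat (N x) \<in> carrier_mat n n" for x using adj_mat(1)[OF Nc] .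
  have Sx: "S x = - ((1 / det (N x)) \<cdot>\<^sub>m (adj_mat (N x) * Nm x))" if "x \<ge> \<kappa>0" for x
  proof -
    have "mat_inv n (N x) = (1 / det (N x)) \<cdot>\<^sub>m adj_mat (N x)"
      using adj_inverse[OF Nc detnz[OF that]] by (intro mat_inv_unique[OF Nc]) auto
    moreover have "(1 / det (N x)) \<cdot>\<^sub>m adj_mat (N x) * Nm x = (1 / det (N x)) \<cdot>\<^sub>m (adj_mat (N x) * Nm x)"
      by (rule mult_smult_assoc_mat[OF adjc Nmc])
    ultimately show ?thesis unfolding S_eq by simp
  qed
  have Sc: "S x \<in> carrier_mat n n" if "x \<ge> \<kappa>0" for x
    unfolding Sx[OF that] by (intro uminus_carrier_mat smult_carrier_mat mult_carrier_mat[OF adjc Nmc])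
  have SQ: "S x $$ (i,j) * det (N x) = Q x $$ (i,j)" if "x \<ge> \<kappa>0" "i < n" "j < n" for x i j
  proof -
    have dims: "dim_row (adj_mat (N x) * Nm x) = n" "dim_col (adj_mat (N x) * Nm x) = n"
      using adjc[of x] Nmc[of x] by auto
    have "S x $$ (i,j) = - ((1 / det (N x)) * (adj_mat (N x) * Nm x) $$ (i,j))"
      using Sx[OF that(1)] dims that by simp
    then show ?thesis unfolding Q_def using detnz[OF that(1)] dims that by simp
  qed
  have Sent: "(1\<^sub>m n + S x) $$ (i,j) = (if i = j then 1 else 0) + S x $$ (i,j)"
    if "x \<ge> \<kappa>0" "i < n" "j < n" for x i j
    using Sc[OF that(1)] that by simp
  have posS: "0 < (1\<^sub>m n + S x) $$ (i,j)" if "x \<ge> \<kappa>0" "i < n" "j < n" for x i j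
  proof -
    have "mat_pos (1\<^sub>m n + S x)" using H[OF that(1)] unfolding S_def dA by blast
    moreover have "dim_row (1\<^sub>m n + S x) = n" "dim_col (1\<^sub>m n + S x) = n" using Sc[OF that(1)] by auto
    ultimately show ?thesis unfolding mat_pos_def using that by auto
  qed
  define \<alpha> where "\<alpha> = Min (a ` {..<nI})"
  have "\<alpha> \<in> a ` {..<nI}" unfolding \<alpha>_def using assms(1) by (intro Min_in) auto
  then have apos: "\<alpha> > 0" using assms(2) by auto
  have ale: "\<alpha> \<le> a l" if "l < nI" for l unfolding \<alpha>_def using that by (intro Min_le) auto
  define e where "e = \<alpha> / 16"
  have epos: "e > 0" unfolding e_def using apos by simp
  have evS: "\<forall>ij \<in> {..<n} \<times> {..<n}. eventually (\<lambda>x. cmod (S x $$ ij) \<le> exp (2*e*x)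
      \<and> exp (-(2*e*x)) \<le> Re ((1\<^sub>m n + S x) $$ ij)) at_top"
  proof
    fix ij assume "ij \<in> {..<n} \<times> {..<n}"
    then obtain i j where ij: "ij = (i,j)" "i < n" "j < n" by auto
    obtain qp where qp: "\<forall>x. Q x $$ (i,j) = poly qp (of_real x)"
      using pfQ ij unfolding pfmat_def polyfun_def by blast
    have "eventually (\<lambda>x. cmod (S x $$ (i,j)) \<le> exp (2*e*x)
        \<and> exp (-(2*e*x)) \<le> Re ((if i = j then 1 else 0) + S x $$ (i,j))) at_top"
    proof (rule entry_bounds[of "\<lambda>x. det (N x)" Dp "\<lambda>x. Q x $$ (i,j)" qp \<kappa>0 "\<lambda>x. S x $$ (i,j)" "if i = j then 1 else 0" e, OF Dp qp _ _ _ epos])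
      show "\<forall>x\<ge>\<kappa>0. S x $$ (i, j) * det (N x) = Q x $$ (i, j)" using SQ ij by blast
      show "\<forall>x\<ge>\<kappa>0. det (N x) \<noteq> 0" using detnz by blast
      show "\<forall>x\<ge>\<kappa>0. 0 < (if i = j then 1 else 0) + S x $$ (i, j)" using posS Sent ij by metis
    qed
    then show "eventually (\<lambda>x. cmod (S x $$ ij) \<le> exp (2*e*x)
      \<and> exp (-(2*e*x)) \<le> Re ((1\<^sub>m n + S x) $$ ij)) at_top"
      using eventually_ge_at_top[of \<kappa>0]
      by eventually_elim (use Sent ij in auto)
  qed
  have evS': "eventually (\<lambda>x. \<forall>ij \<in> {..<n} \<times> {..<n}. cmod (S x $$ ij) \<le> exp (2*e*x)
      \<and> exp (-(2*e*x)) \<le> Re ((1\<^sub>m n + S x) $$ ij)) at_top"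
    by (rule eventually_ball_finite[OF _ evS]) auto
  define tr where "tr = (\<lambda>(x::real) i j. if nE \<le> i \<and> i < nE + nI \<and> j = i + nI then exp (-(x * a (i - nE)))
      else if nE + nI \<le> i \<and> j + nI = i then exp (-(x * a (i - nE - nI))) else 0)"
  have exr: "exp (\<i> * (\<i> * complex_of_real x) * complex_of_real r) = complex_of_real (exp (-(x * r)))" for x r
  proof -
    have "\<i> * (\<i> * complex_of_real x) * complex_of_real r = complex_of_real (-(x * r))" by simp
    then show ?thesis by (simp only: exp_of_real)
  qed
  have exr2: "exp (- (complex_of_real x * complex_of_real r)) = complex_of_real (exp (-(x * r)))" for x r
  proof -
    have "- (complex_of_real x * complex_of_real r) = complex_of_real (-(x * r))" by simp
    then show ?thesis by (simp only: exp_of_real)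
  qed
  have Tent: "T x $$ (i,j) = complex_of_real (tr x i j)" if "i < n" "j < n" for x i j
    unfolding T_def Tmat_def tr_def using that unfolding n_def by (simp add: exr exr2)
  have Tc: "T x \<in> carrier_mat n n" for x unfolding T_def Tmat_def n_def by simp
  define Tr where "Tr = (\<lambda>x. mat n n (\<lambda>(i,j). tr x i j))"
  have Trc: "Tr x \<in> carrier_mat n n" for x unfolding Tr_def by simp
  have TX: "T x = map_mat complex_of_real (Tr x)" for x
    by (rule eq_matI) (use Tc Trc Tent in \<open>auto simp: Tr_def\<close>)
  have trb: "\<bar>Tr x $$ (i,j)\<bar> \<le> exp (-(\<alpha> * x))" if "x \<ge> 0" "i < n" "j < n" for x i j
  proof -
    have m: "exp (-(x * a l)) \<le> exp (-(\<alpha> * x))" if "l < nI" for l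
      using mult_left_mono[OF ale[OF that] \<open>x \<ge> 0\<close>] by (simp add: mult.commute)
    have "i - nE < nI" if "i < nE + nI" using that assms(1) by arith
    moreover have "i - nE - nI < nI" using \<open>i < n\<close> assms(1) unfolding n_def by arith
    ultimately show ?thesis using that m unfolding Tr_def tr_def by auto
  qed
  define Sr where "Sr = (\<lambda>x. mat n n (\<lambda>(i,j). Re (S x $$ (i,j))))"
  have Src: "Sr x \<in> carrier_mat n n" for x unfolding Sr_def by simp
  have SX: "S x = map_mat complex_of_real (Sr x)" if "x \<ge> \<kappa>0" for x
  proof (rule eq_matI)
    fix i j assume ij: "i < dim_row (map_mat complex_of_real (Sr x))" "j < dim_col (map_mat complex_of_real (Sr x))"
    then have ij': "i < n" "j < n" using Src[of x] by auto
    have "Im ((1\<^sub>m n + S x) $$ (i,j)) = 0" using posS[OF that ij'] by (simp add: less_complex_def)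
    then have "Im (S x $$ (i,j)) = 0" using Sent[OF that ij'] by (cases "i = j") auto
    then show "S x $$ (i,j) = map_mat complex_of_real (Sr x) $$ (i,j)"
      using ij' by (simp add: Sr_def complex_eq_iff)
  qed (use Sc[OF that] Src[of x] in auto)
  define ss where "ss = (\<lambda>x::real. exp (2*e*x))"
  define tt where "tt = (\<lambda>x::real. exp (-(\<alpha>*x)))"
  define ll where "ll = (\<lambda>x::real. exp (-(2*e*x)))"
  have c1ev: "eventually (\<lambda>x. n * (n * ss x * tt x) \<le> 1/2) at_top"
  proof -
    have "eventually (\<lambda>x. (2 * n * n) * exp (- ((7*\<alpha>/8) * x)) < 1) at_top"
      by (rule ev_small) (use apos in simp)
    then show ?thesis
    proof eventually_elim
      case (elim x)
      have "ss x * tt x = exp (- ((7*\<alpha>/8) * x))"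
        unfolding ss_def tt_def e_def by (simp add: exp_add[symmetric] field_simps)
      then show ?case using elim by (simp add: field_simps)
    qed
  qed
  have c2ev: "eventually (\<lambda>x. n * (real n * 2 * (n * ss x * tt x)) * ss x < ll x) at_top"
  proof -
    have "eventually (\<lambda>x. (2 * n * n * n) * exp (- ((5*\<alpha>/8) * x)) < 1) at_top"
      by (rule ev_small) (use apos in simp)
    then show ?thesis
    proof eventually_elim
      case (elim x)
      have "ss x * tt x * ss x = exp (- ((5*\<alpha>/8) * x)) * ll x"
        unfolding ss_def tt_def ll_def e_def by (simp add: exp_add[symmetric] field_simps)
      moreover have "ll x > 0" unfolding ll_def by simp
      ultimately have "(2 * n * n * n) * (ss x * tt x * ss x) < ll x"
        using mult_strict_right_mono[OF elim, of "ll x"] by (simp add: mult.assoc)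
      then show ?case by (simp add: algebra_simps)
    qed
  qed
  have main: "eventually (\<lambda>x. invertible_mat (N x) \<and> invertible_mat (1\<^sub>m n - S x * T x)
      \<and> mat_pos (1\<^sub>m n + mat_inv n (1\<^sub>m n - S x * T x) * S x)) at_top"
    using eventually_conj[OF evS' eventually_conj[OF c1ev eventually_conj[OF c2ev
        eventually_conj[OF eventually_ge_at_top[of \<kappa>0] eventually_ge_at_top[of 0]]]]]
  proof eventually_elim
    case (elim x)
    have x0: "x \<ge> \<kappa>0" "x \<ge> 0" using elim by auto
    have sb: "\<forall>i<n. \<forall>j<n. \<bar>Sr x $$ (i,j)\<bar> \<le> ss x"
    proof (intro allI impI)
      fix i j assume ij: "i < n" "j < n"
      have "\<bar>Re (S x $$ (i,j))\<bar> \<le> cmod (S x $$ (i,j))" by (rule abs_Re_le_cmod)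
      also have "\<dots> \<le> ss x" using elim ij unfolding ss_def by auto
      finally show "\<bar>Sr x $$ (i,j)\<bar> \<le> ss x" using ij by (simp add: Sr_def)
    qed
    have tb: "\<forall>i<n. \<forall>j<n. \<bar>Tr x $$ (i,j)\<bar> \<le> tt x" using trb x0 unfolding tt_def by blast
    have lb: "\<forall>i<n. \<forall>j<n. ll x \<le> (1\<^sub>m n + Sr x) $$ (i,j)"
    proof (intro allI impI)
      fix i j assume ij: "i < n" "j < n"
      have "ll x \<le> Re ((1\<^sub>m n + S x) $$ (i,j))" using elim ij unfolding ll_def by auto
      also have "\<dots> = (1\<^sub>m n + Sr x) $$ (i,j)" using Sent[OF x0(1) ij] ij by (simp add: Sr_def)
      finally show "ll x \<le> (1\<^sub>m n + Sr x) $$ (i,j)" .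
    qed
    obtain Y where Y: "Y \<in> carrier_mat n n" "(1\<^sub>m n - Sr x * Tr x) * Y = 1\<^sub>m n"
      "Y * (1\<^sub>m n - Sr x * Tr x) = 1\<^sub>m n" "\<forall>i<n. \<forall>j<n. 0 < (1\<^sub>m n + Y * Sr x) $$ (i,j)"
      using main_real[OF Src Trc sb tb lb] elim by blast
    have "invertible_mat (1\<^sub>m n - S x * T x) \<and> mat_pos (1\<^sub>m n + mat_inv n (1\<^sub>m n - S x * T x) * S x)"
      unfolding SX[OF x0(1)] TX by (rule transfer_lemma[OF Src Trc Y])
    moreover have "invertible_mat (N x)" using H[OF x0(1)] unfolding N_def by blast
    ultimately show ?case by blast
  qed
  then obtain X0 where X0: "\<And>x. x \<ge> X0 \<Longrightarrow> invertible_mat (N x) \<and> invertible_mat (1\<^sub>m n - S x * T x)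
      \<and> mat_pos (1\<^sub>m n + mat_inv n (1\<^sub>m n - S x * T x) * S x)"
    unfolding eventually_at_top_linorder by blast
  show ?thesis
    by (rule exI[of _ "max X0 0"]) (use X0 in \<open>auto simp: N_def S_def T_def n_def\<close>)
qed


end
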